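(* Let $(M,J,g)$ be a metallic pseudo-Riemannian manifold with $J^2=pJ+qI$, where $p,q\in\mathbb{R}$ satisfy $p^2+4q\neq 0$. If $dJ=0$, then $\delta J=0$.
   Context: A metallic pseudo-Riemannian manifold $(M,J,g)$ is a manifold with a pseudo-Riemannian metric $g$ and a $g$-symmetric $(1,1)$-tensor field $J$ with $J^2=pJ+qI$ for real $p,q$. With $\nabla$ the Levi-Civita connection of $g$ and $\{E_i\}_{1\le i\le n}$ a local $g$-orthonormal frame, set $(dJ)(X,Y)=(\nabla_XJ)Y-(\nabla_YJ)X$ and $\delta J=-\sum_{i=1}^n(\nabla_{E_i}J)E_i$. *)

theory Defs
  imports "HOL-Analysis.Analysis"
begin

text \<open>Local coordinate model: a chart domain U (open subset of R^n, n = CARD('n)),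
  metric coefficients g x = (g_ij(x)) and the (1,1)-tensor J x = (J^k_j(x)),
  with (J x) $ k $ j = J^k_j.  Vectors act as columns: J X = J x *v X,
  g(X,Y) = X \<bullet> (g x *v Y).\<close>

definition partial :: "'n::finite \<Rightarrow> (real^'n \<Rightarrow> real) \<Rightarrow> real^'n \<Rightarrow> real" where
  "partial i f x = frechet_derivative f (at x) (axis i 1)"

fun iter_partial :: "'n::finite list \<Rightarrow> (real^'n \<Rightarrow> real) \<Rightarrow> real^'n \<Rightarrow> real" where
  "iter_partial [] f = f"
| "iter_partial (i # is) f = partial i (iter_partial is f)"

definition smooth_on :: "(real^'n::finite) set \<Rightarrow> (real^'n \<Rightarrow> real) \<Rightarrow> bool" where
  "smooth_on U f \<longleftrightarrow> (\<forall>is. \<forall>x\<in>U. iter_partial is f differentiable (at x))"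

definition gmetric :: "real^'n^'n \<Rightarrow> real^'n \<Rightarrow> real^'n \<Rightarrow> real" where
  "gmetric G X Y = X \<bullet> (G *v Y)"

definition christoffel :: "(real^'n \<Rightarrow> real^'n^'n) \<Rightarrow> real^'n \<Rightarrow> 'n::finite \<Rightarrow> 'n \<Rightarrow> 'n \<Rightarrow> real" where
  "christoffel g x k i j = (1/2) * (\<Sum>l\<in>UNIV. matrix_inv (g x) $ k $ l *
      (partial i (\<lambda>y. g y $ j $ l) x + partial j (\<lambda>y. g y $ i $ l) x
       - partial l (\<lambda>y. g y $ i $ j) x))"

text \<open>Components of nabla_{d_i} J : entry (k,j) is (nabla_i J)^k_j.\<close>
definition nablaJ_coord :: "(real^'n \<Rightarrow> real^'n^'n) \<Rightarrow> (real^'n \<Rightarrow> real^'n^'n) \<Rightarrow> real^'n \<Rightarrow> 'n::finite \<Rightarrow> real^'n^'n" where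
  "nablaJ_coord g J x i = (\<chi> k j. partial i (\<lambda>y. J y $ k $ j) x
      + (\<Sum>m\<in>UNIV. christoffel g x k i m * J x $ m $ j)
      - (\<Sum>m\<in>UNIV. christoffel g x m i j * J x $ k $ m))"

definition nablaJ :: "(real^'n \<Rightarrow> real^'n^'n) \<Rightarrow> (real^'n \<Rightarrow> real^'n^'n) \<Rightarrow> real^'n \<Rightarrow> real^'n \<Rightarrow> real^'n^'n::finite" where
  "nablaJ g J x X = (\<Sum>i\<in>UNIV. X $ i *\<^sub>R nablaJ_coord g J x i)"

definition dJ :: "(real^'n \<Rightarrow> real^'n^'n) \<Rightarrow> (real^'n \<Rightarrow> real^'n^'n) \<Rightarrow> real^'n \<Rightarrow> real^'n \<Rightarrow> real^'n \<Rightarrow> real^'n::finite" where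
  "dJ g J x X Y = nablaJ g J x X *v Y - nablaJ g J x Y *v X"

definition orthonormal_frame :: "real^'n^'n \<Rightarrow> ('n::finite \<Rightarrow> real^'n) \<Rightarrow> bool" where
  "orthonormal_frame G E \<longleftrightarrow>
     (\<forall>a b. a \<noteq> b \<longrightarrow> gmetric G (E a) (E b) = 0) \<and> (\<forall>a. \<bar>gmetric G (E a) (E a)\<bar> = 1)"

definition deltaJ :: "(real^'n \<Rightarrow> real^'n^'n) \<Rightarrow> (real^'n \<Rightarrow> real^'n^'n) \<Rightarrow> real^'n \<Rightarrow> ('n::finite \<Rightarrow> real^'n) \<Rightarrow> real^'n" where
  "deltaJ g J x E = - (\<Sum>a\<in>UNIV. gmetric (g x) (E a) (E a) *\<^sub>R (nablaJ g J x (E a) *v E a))"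

definition metallic_pR :: "(real^'n::finite) set \<Rightarrow> (real^'n \<Rightarrow> real^'n^'n) \<Rightarrow> (real^'n \<Rightarrow> real^'n^'n) \<Rightarrow> real \<Rightarrow> real \<Rightarrow> bool" where
  "metallic_pR U g J p q \<longleftrightarrow> open U \<and>
     (\<forall>i j. smooth_on U (\<lambda>y. g y $ i $ j) \<and> smooth_on U (\<lambda>y. J y $ i $ j)) \<and>
     (\<forall>x\<in>U. transpose (g x) = g x \<and> det (g x) \<noteq> 0 \<and>
        (\<forall>X Y. gmetric (g x) (J x *v X) Y = gmetric (g x) X (J x *v Y)) \<and>
        J x ** J x = p *\<^sub>R J x + q *\<^sub>R mat 1)"

end

theory Submission
  imports Defs
begin


lemma mm_ldist: "(A::real^'n^'m) ** (B + C) = A ** B + A ** C"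
  by (rule matrix_add_ldistrib)
lemma mm_rdist: "((A::real^'n^'m) + B) ** C = A ** C + B ** C"
  by (simp add: matrix_matrix_mult_def vec_eq_iff sum.distrib algebra_simps)
lemma mm_lsub: "(A::real^'n^'m) ** (B - C) = A ** B - A ** C"
  by (simp add: matrix_matrix_mult_def vec_eq_iff sum_subtractf algebra_simps)
lemma mm_rsub: "((A::real^'n^'m) - B) ** C = A ** C - B ** C"
  by (simp add: matrix_matrix_mult_def vec_eq_iff sum_subtractf algebra_simps)
lemma mm_lscale: "(A::real^'n^'m) ** (c *\<^sub>R B) = c *\<^sub>R (A ** B)"
  by (simp add: matrix_matrix_mult_def vec_eq_iff sum_distrib_left algebra_simps)
lemma mm_rscale: "(c *\<^sub>R (A::real^'n^'m)) ** B = c *\<^sub>R (A ** B)"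
  by (simp add: matrix_matrix_mult_def vec_eq_iff sum_distrib_left algebra_simps)
lemma tr_add: "transpose ((A::real^'n^'m) + B) = transpose A + transpose B"
  by (simp add: transpose_def vec_eq_iff)
lemma tr_sub: "transpose ((A::real^'n^'m) - B) = transpose A - transpose B"
  by (simp add: transpose_def vec_eq_iff)

lemmas malg = mm_ldist mm_rdist mm_lsub mm_rsub mm_lscale mm_rscale tr_add tr_sub
  transpose_scalar matrix_transpose_mul matrix_mul_assoc transpose_transpose

lemma alg1:
  fixes G J dJ C :: "real^'n^'n"
  assumes "J**J = p*\<^sub>R J + q*\<^sub>R mat 1" "dJ**J + J**dJ = p *\<^sub>R dJ"
  shows "(dJ + C**J - J**C)**J + J**(dJ + C**J - J**C) = p*\<^sub>R (dJ + C**J - J**C)"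
proof -
  have "(dJ + C**J - J**C)**J + J**(dJ + C**J - J**C) = (dJ**J + J**dJ) + C**(J**J) - (J**J)**C"
    by (simp add: malg algebra_simps)
  also have "\<dots> = p*\<^sub>R (dJ + C**J - J**C)"
    using assms by (simp add: malg algebra_simps)
  finally show ?thesis .
qed

lemma alg2:
  fixes G J dJ C D :: "real^'n^'n"
  assumes "transpose G = G" "G**J = transpose J ** G"
    "D**J + G**dJ = transpose dJ ** G + transpose J ** D" "D = G**C + transpose C ** G"
  shows "transpose (dJ + C**J - J**C) ** G = G ** (dJ + C**J - J**C)"
proof -
  have e: "G**dJ - transpose dJ ** G = transpose J ** D - D**J"
    using assms(3) by (simp add: algebra_simps)
  have "G ** (dJ + C**J - J**C) - transpose (dJ + C**J - J**C) ** G
      = (G**dJ - transpose dJ ** G) + G**C**J - G**J**C - transpose J ** transpose C ** G + transpose C ** transpose J ** G"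
    by (simp add: malg algebra_simps)
  also have "\<dots> = transpose J ** G ** C - G ** J ** C + transpose C ** transpose J ** G - transpose C ** G ** J"
    unfolding e assms(4) by (simp add: malg algebra_simps)
  also have "\<dots> = 0"
  proof -
    have a: "transpose J ** G ** C = G ** J ** C" using assms(2) by simp
    have b: "transpose C ** transpose J ** G = transpose C ** G ** J"
      using assms(2) by (metis matrix_mul_assoc)
    show ?thesis unfolding a b by simp
  qed
  finally show ?thesis by simp
qed

lemma alg3:
  fixes J N :: "real^'n^'n"
  assumes "J**J = p*\<^sub>R J + q*\<^sub>R mat 1" "N**J + J**N = p *\<^sub>R N" "p^2 + 4*q \<noteq> 0"
  shows "trace N = 0"
proof -
  have t1: "2 * trace (N**J) = p * trace N"
  proof -
    have "trace (N**J + J**N) = p * trace N" using assms(2)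
      by (simp add: trace_def sum_distrib_left)
    thus ?thesis by (simp add: trace_add trace_mul_sym[of J N])
  qed
  have "J**(N**J) + J**(J**N) = p *\<^sub>R (J**N)"
    using arg_cong[OF assms(2), of "\<lambda>M. J ** M"] by (simp add: malg)
  hence "J**N**J + p *\<^sub>R (J**N) + q *\<^sub>R N = p *\<^sub>R (J**N)"
    using assms(1) by (simp add: malg)
  hence "J**N**J = - q *\<^sub>R N" by (simp add: algebra_simps add_eq_0_iff2)
  hence "trace (J**N**J) = - q * trace N" by (simp add: trace_def sum_distrib_left sum_negf)
  moreover have "trace (J**N**J) = trace (N**(J**J))"
    by (metis matrix_mul_assoc trace_mul_sym)
  moreover have "trace (N**(J**J)) = p * trace (N**J) + q * trace N"
    using assms(1) by (simp add: malg trace_add trace_def sum_distrib_left sum.distrib)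
  ultimately have "p * trace (N**J) = - 2 * q * trace N" by simp
  moreover have "p * (p * trace N) = 2 * (p * trace (N**J))"
    using t1 by (metis mult.left_commute)
  ultimately have "(p^2 + 4*q) * trace N = 0"
    by (simp add: power2_eq_square algebra_simps)
  with assms(3) show ?thesis by simp
qed



lemma gm: fixes G :: "real^'n^'n" and E :: "'n \<Rightarrow> real^'n"
  shows "(transpose (\<chi> k a. E a $ k) ** G ** (\<chi> k a. E a $ k)) $ a $ b = gmetric G (E a) (E b)"
proof -
  have "(transpose (\<chi> k a. E a $ k) ** G ** (\<chi> k a. E a $ k)) $ a $ b
    = (\<Sum>k\<in>UNIV. \<Sum>m\<in>UNIV. E a $ m * G $ m $ k * E b $ k)"
    by (simp add: matrix_matrix_mult_def transpose_def sum_distrib_right)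
  also have "\<dots> = (\<Sum>m\<in>UNIV. \<Sum>k\<in>UNIV. E a $ m * G $ m $ k * E b $ k)"
    by (rule sum.swap)
  also have "\<dots> = gmetric G (E a) (E b)"
    by (simp add: gmetric_def inner_vec_def matrix_vector_mult_def sum_distrib_left mult.assoc)
  finally show ?thesis .
qed

lemma pdp: fixes G :: "real^'n^'n" and E :: "'n \<Rightarrow> real^'n"
  shows "(\<chi> k a. E a $ k) ** (\<chi> a b. if a = b then gmetric G (E a) (E a) else 0) ** transpose (\<chi> k a. E a $ k)
    = (\<chi> k l. \<Sum>a\<in>UNIV. gmetric G (E a) (E a) * E a $ k * E a $ l)"
proof -
  have "((\<chi> k a. E a $ k) ** (\<chi> a b. if a = b then gmetric G (E a) (E a) else (0::real))) = (\<chi> k a. E a $ k * gmetric G (E a) (E a))"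
    by (simp add: matrix_matrix_mult_def vec_eq_iff if_distrib cong: if_cong)
  then show ?thesis
    by (simp add: matrix_matrix_mult_def vec_eq_iff transpose_def mult.commute mult.left_commute)
qed

lemma fs1:  fixes G B :: "real^'n^'n" and E :: "'n \<Rightarrow> real^'n"
  shows "(\<Sum>a\<in>UNIV. gmetric G (E a) (E a) * (E a \<bullet> (B *v E a)))
     = (\<Sum>a\<in>UNIV. \<Sum>k\<in>UNIV. \<Sum>l\<in>UNIV. B$k$l * (gmetric G (E a) (E a) * E a $ l * E a $ k))"
  by (simp add: inner_vec_def matrix_vector_mult_def sum_distrib_left mult.commute mult.left_commute)


lemma frame_inv:
  fixes G :: "real^'n^'n" and E :: "'n \<Rightarrow> real^'n"
  assumes "orthonormal_frame G E"
  defines "Q \<equiv> (\<chi> k l. \<Sum>a\<in>UNIV. gmetric G (E a) (E a) * E a $ k * E a $ l)"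
  shows "Q ** G = mat 1"
proof -
  define P :: "real^'n^'n" where "P = (\<chi> k a. E a $ k)"
  define Dg :: "real^'n^'n" where "Dg = (\<chi> a b. if a = b then gmetric G (E a) (E a) else 0)"
  have gm: "(transpose P ** G ** P) $ a $ b = gmetric G (E a) (E b)" for a b
    unfolding P_def by (rule gm)
  have "(transpose P ** G) ** (P ** Dg) = mat 1"
  proof -
    have "(transpose P ** G) ** (P ** Dg) = (transpose P ** G ** P) ** Dg"
      by (simp add: matrix_mul_assoc)
    also have "\<dots> = mat 1"
    proof (subst vec_eq_iff, intro allI, subst vec_eq_iff, intro allI)
      fix a b
      have "((transpose P ** G ** P) ** Dg) $ a $ b = gmetric G (E a) (E b) * gmetric G (E b) (E b)"
        unfolding matrix_matrix_mult_def[of "transpose P ** G ** P" Dg]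
        by (simp add: Dg_def gm if_distrib cong: if_cong)
      also have "\<dots> = mat 1 $ a $ b"
      proof (cases "a = b")
        case True
        have "\<bar>gmetric G (E b) (E b)\<bar> = 1" using assms(1) unfolding orthonormal_frame_def by blast
        then have "gmetric G (E b) (E b) * gmetric G (E b) (E b) = 1"
          by (metis abs_mult_self_eq mult_1)
        with True show ?thesis by (simp add: mat_def)
      next
        case False
        then show ?thesis using assms(1) unfolding orthonormal_frame_def by (simp add: mat_def)
      qed
      finally show "((transpose P ** G ** P) ** Dg) $ a $ b = mat 1 $ a $ b" .
    qed
    finally show ?thesis .
  qed
  hence "(P ** Dg) ** (transpose P ** G) = mat 1"
    using matrix_left_right_inverse by blast
  moreover have "(P ** Dg) ** (transpose P ** G) = (P ** Dg ** transpose P) ** G"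
    by (simp add: matrix_mul_assoc)
  moreover have "P ** Dg ** transpose P = Q"
    unfolding P_def Dg_def Q_def by (rule pdp)
  ultimately show ?thesis by simp
qed

lemma frame_sum:
  fixes G B :: "real^'n^'n" and E :: "'n \<Rightarrow> real^'n"
  defines "Q \<equiv> (\<chi> k l. \<Sum>a\<in>UNIV. gmetric G (E a) (E a) * E a $ k * E a $ l)"
  shows "(\<Sum>a\<in>UNIV. gmetric G (E a) (E a) * (E a \<bullet> (B *v E a))) = trace (B ** Q)"
proof -
  have "(\<Sum>a\<in>UNIV. gmetric G (E a) (E a) * (E a \<bullet> (B *v E a)))
     = (\<Sum>a\<in>UNIV. \<Sum>k\<in>UNIV. \<Sum>l\<in>UNIV. B$k$l * (gmetric G (E a) (E a) * E a $ l * E a $ k))"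
    by (rule fs1)
  also have "\<dots> = (\<Sum>k\<in>UNIV. \<Sum>l\<in>UNIV. \<Sum>a\<in>UNIV. B$k$l * (gmetric G (E a) (E a) * E a $ l * E a $ k))"
    by (subst sum.swap, rule sum.cong[OF refl], rule sum.swap)
  also have "\<dots> = trace (B ** Q)"
    by (simp add: Q_def trace_def matrix_matrix_mult_def sum_distrib_left)
  finally show ?thesis .
qed



lemma smooth_hasd:
  assumes "smooth_on U f" "x \<in> U"
  shows "(f has_derivative frechet_derivative f (at x)) (at x)"
proof -
  have "iter_partial [] f differentiable (at x)" using assms unfolding smooth_on_def by blast
  thus ?thesis by (simp add: frechet_derivative_works)
qed

lemma local_deriv_eq:
  assumes "open U" "x \<in> U" "\<And>y. y \<in> U \<Longrightarrow> f y = h y"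
    "(f has_derivative F) (at x)" "(h has_derivative H) (at x)"
  shows "F v = H v"
proof -
  have "(h has_derivative F) (at x)"
    using has_derivative_transform_within_open[OF assms(4) assms(1) assms(2)] assms(3) by blast
  have "F = H" by (rule has_derivative_unique[OF \<open>(h has_derivative F) (at x)\<close> assms(5)])
  thus ?thesis by simp
qed

context
  fixes U :: "(real^'n::finite) set" and g J :: "real^'n \<Rightarrow> real^'n^'n" and p q :: real and x :: "real^'n"
  assumes met: "metallic_pR U g J p q" and xU: "x \<in> U"
begin

definition "FJ k j = frechet_derivative (\<lambda>y. J y $ k $ j) (at x)"
definition "FG k j = frechet_derivative (\<lambda>y. g y $ k $ j) (at x)"

lemma opn: "open U" using met unfolding metallic_pR_def by blast

lemma hJ: "((\<lambda>y. J y $ k $ j) has_derivative FJ k j) (at x)"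
  unfolding FJ_def using met xU unfolding metallic_pR_def by (blast intro: smooth_hasd)
lemma hG: "((\<lambda>y. g y $ k $ j) has_derivative FG k j) (at x)"
  unfolding FG_def using met xU unfolding metallic_pR_def by (blast intro: smooth_hasd)

lemma pJ: "partial i (\<lambda>y. J y $ k $ j) x = FJ k j (axis i 1)"
  by (simp add: partial_def FJ_def)
lemma pG: "partial i (\<lambda>y. g y $ k $ j) x = FG k j (axis i 1)"
  by (simp add: partial_def FG_def)

lemma derJJ:
  "(\<Sum>m\<in>UNIV. J x $ k $ m * FJ m j v + FJ k m v * J x $ m $ j) = p * FJ k j v"
proof (rule local_deriv_eq[OF opn xU])
  show "(\<lambda>y. \<Sum>m\<in>UNIV. J y $ k $ m * J y $ m $ j) y = (\<lambda>y. p * J y $ k $ j + q * mat 1 $ k $ j) y"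
    if "y \<in> U" for y
  proof -
    have "J y ** J y = p *\<^sub>R J y + q *\<^sub>R mat 1" using met that unfolding metallic_pR_def by blast
    hence "(J y ** J y) $ k $ j = (p *\<^sub>R J y + q *\<^sub>R mat 1) $ k $ j" by simp
    thus ?thesis by (simp add: matrix_matrix_mult_def)
  qed
  show "((\<lambda>y. \<Sum>m\<in>UNIV. J y $ k $ m * J y $ m $ j) has_derivative
     (\<lambda>v. \<Sum>m\<in>UNIV. J x $ k $ m * FJ m j v + FJ k m v * J x $ m $ j)) (at x)"
    by (intro has_derivative_sum has_derivative_mult hJ)
  show "((\<lambda>y. p * J y $ k $ j + q * mat 1 $ k $ j) has_derivative (\<lambda>v. p * FJ k j v)) (at x)"
    using has_derivative_add[OF has_derivative_mult_right[OF hJ, of p k j] has_derivative_const[of "q * mat 1 $ k $ j"]]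
    by simp
qed

lemma derGJ:
  "(\<Sum>m\<in>UNIV. g x $ k $ m * FJ m j v + FG k m v * J x $ m $ j)
   = (\<Sum>m\<in>UNIV. J x $ m $ k * FG m j v + FJ m k v * g x $ m $ j)"
proof -
  have eq: "(\<lambda>y. \<Sum>m\<in>UNIV. g y $ k $ m * J y $ m $ j) y = (\<lambda>y. \<Sum>m\<in>UNIV. J y $ m $ k * g y $ m $ j) y"
    if "y \<in> U" for y
  proof -
    have s: "\<forall>X Y. gmetric (g y) (J y *v X) Y = gmetric (g y) X (J y *v Y)"
      using met that unfolding metallic_pR_def by blast
    have "gmetric (g y) (J y *v axis k 1) (axis j 1) = gmetric (g y) (axis k 1) (J y *v axis j 1)"
      using s by blast
    hence "(\<Sum>m\<in>UNIV. J y $ m $ k * g y $ m $ j) = (\<Sum>m\<in>UNIV. g y $ k $ m * J y $ m $ j)"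
      unfolding gmetric_def matrix_vector_mult_basis inner_axis'
      by (simp add: column_def inner_vec_def matrix_vector_mult_def)
    thus ?thesis by simp
  qed
  have d1: "((\<lambda>y. \<Sum>m\<in>UNIV. g y $ k $ m * J y $ m $ j) has_derivative
     (\<lambda>v. \<Sum>m\<in>UNIV. g x $ k $ m * FJ m j v + FG k m v * J x $ m $ j)) (at x)"
    by (intro has_derivative_sum has_derivative_mult hJ hG)
  have d2: "((\<lambda>y. \<Sum>m\<in>UNIV. J y $ m $ k * g y $ m $ j) has_derivative
     (\<lambda>v. \<Sum>m\<in>UNIV. J x $ m $ k * FG m j v + FJ m k v * g x $ m $ j)) (at x)"
    by (intro has_derivative_sum has_derivative_mult hJ hG)
  show ?thesis using local_deriv_eq[OF opn xU eq d1 d2] by simp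
qed

lemma derSym: "FG j l v = FG l j v"
proof (rule local_deriv_eq[OF opn xU _ hG hG])
  fix y assume "y \<in> U"
  hence "transpose (g y) = g y" using met unfolding metallic_pR_def by blast
  hence "transpose (g y) $ l $ j = g y $ l $ j" by simp
  thus "g y $ j $ l = g y $ l $ j" by (simp add: transpose_def)
qed

definition "dJm i = (\<chi> k j. FJ k j (axis i 1))"
definition "dGm i = (\<chi> k j. FG k j (axis i 1))"
definition "Cm i = (\<chi> k m. christoffel g x k i m)"

lemma B1: "dJm i ** J x + J x ** dJm i = p *\<^sub>R dJm i"
  using derJJ[where v="axis i 1"]
  by (simp add: dJm_def matrix_matrix_mult_def vec_eq_iff sum.distrib) (simp add: add.commute)

lemma B2: "dGm i ** J x + g x ** dJm i = transpose (dJm i) ** g x + transpose (J x) ** dGm i"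
  using derGJ[where v="axis i 1"]
  by (simp add: dJm_def dGm_def matrix_matrix_mult_def vec_eq_iff sum.distrib transpose_def
      ac_simps)

lemma Ginv: "g x ** matrix_inv (g x) = mat 1"
proof -
  have "det (g x) \<noteq> 0" using met xU unfolding metallic_pR_def by blast
  hence "invertible (g x)" by (simp add: invertible_det_nz)
  hence "\<exists>A'. g x ** A' = mat 1 \<and> A' ** g x = mat 1" unfolding invertible_def by blast
  hence "g x ** matrix_inv (g x) = mat 1 \<and> matrix_inv (g x) ** g x = mat 1"
    unfolding matrix_inv_def by (rule someI_ex)
  thus ?thesis by blast
qed

lemma GChr: "(\<Sum>k\<in>UNIV. g x $ a $ k * christoffel g x k i j)
   = (1/2) * (FG j a (axis i 1) + FG i a (axis j 1) - FG i j (axis a 1))"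
proof -
  define X where "X l = FG j l (axis i 1) + FG i l (axis j 1) - FG i j (axis l 1)" for l
  have c: "christoffel g x k i j = (1/2) * (\<Sum>l\<in>UNIV. matrix_inv (g x) $ k $ l * X l)" for k
    by (simp add: christoffel_def pG X_def)
  have "(\<Sum>k\<in>UNIV. g x $ a $ k * christoffel g x k i j)
      = (1/2) * (\<Sum>k\<in>UNIV. \<Sum>l\<in>UNIV. g x $ a $ k * matrix_inv (g x) $ k $ l * X l)"
    by (simp add: c sum_distrib_left mult.assoc mult.left_commute)
  also have "\<dots> = (1/2) * (\<Sum>l\<in>UNIV. \<Sum>k\<in>UNIV. g x $ a $ k * matrix_inv (g x) $ k $ l * X l)"
    by (subst sum.swap) simp
  also have "\<dots> = (1/2) * (\<Sum>l\<in>UNIV. (g x ** matrix_inv (g x)) $ a $ l * X l)"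
    by (simp add: matrix_matrix_mult_def sum_distrib_right)
  also have "\<dots> = (1/2) * X a"
    by (simp add: Ginv mat_def if_distrib[where f="\<lambda>c. c * _"] cong: if_cong)
  finally show ?thesis by (simp add: X_def)
qed

lemma compat: "dGm i = g x ** Cm i + transpose (Cm i) ** g x"
proof -
  have gs: "g x $ k $ l = g x $ l $ k" for k l
  proof -
    have "transpose (g x) = g x" using met xU unfolding metallic_pR_def by blast
    hence "transpose (g x) $ l $ k = g x $ l $ k" by simp
    thus ?thesis by (simp add: transpose_def)
  qed
  show ?thesis
  proof (subst vec_eq_iff, intro allI, subst vec_eq_iff, intro allI)
    fix j l
    have "(g x ** Cm i + transpose (Cm i) ** g x) $ j $ l
       = (\<Sum>k\<in>UNIV. g x $ j $ k * christoffel g x k i l) + (\<Sum>k\<in>UNIV. g x $ l $ k * christoffel g x k i j)"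
      by (simp add: matrix_matrix_mult_def Cm_def transpose_def gs mult.commute)
    also have "\<dots> = FG j l (axis i 1)"
      unfolding GChr using derSym[of l j] derSym[of i j] by (simp add: algebra_simps)
    finally show "dGm i $ j $ l = (g x ** Cm i + transpose (Cm i) ** g x) $ j $ l"
      by (simp add: dGm_def)
  qed
qed

lemma Ncoord: "nablaJ_coord g J x i = dJm i + Cm i ** J x - J x ** Cm i"
  by (simp add: nablaJ_coord_def dJm_def Cm_def pJ matrix_matrix_mult_def vec_eq_iff mult.commute)

lemma gsym: "transpose (g x) = g x" using met xU unfolding metallic_pR_def by blast

lemma JJ: "J x ** J x = p *\<^sub>R J x + q *\<^sub>R mat 1" using met xU unfolding metallic_pR_def by blast

lemma symJ: "g x ** J x = transpose (J x) ** g x"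
proof (subst vec_eq_iff, intro allI, subst vec_eq_iff, intro allI)
  fix k j
  have s: "\<forall>X Y. gmetric (g x) (J x *v X) Y = gmetric (g x) X (J x *v Y)"
    using met xU unfolding metallic_pR_def by blast
  have "gmetric (g x) (J x *v axis k 1) (axis j 1) = gmetric (g x) (axis k 1) (J x *v axis j 1)"
    using s by blast
  hence "(\<Sum>m\<in>UNIV. J x $ m $ k * g x $ m $ j) = (\<Sum>m\<in>UNIV. g x $ k $ m * J x $ m $ j)"
    unfolding gmetric_def matrix_vector_mult_basis inner_axis'
    by (simp add: column_def inner_vec_def matrix_vector_mult_def)
  thus "(g x ** J x) $ k $ j = (transpose (J x) ** g x) $ k $ j"
    by (simp add: matrix_matrix_mult_def transpose_def)
qed

lemma Nsym: "transpose (nablaJ_coord g J x i) ** g x = g x ** nablaJ_coord g J x i"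
  unfolding Ncoord by (rule alg2[OF gsym symJ B2 compat])

lemma Ntr: "p\<^sup>2 + 4 * q \<noteq> 0 \<Longrightarrow> trace (nablaJ_coord g J x i) = 0"
  unfolding Ncoord by (rule alg3[OF JJ alg1[OF JJ B1]])

end


lemma sum_sym:
  fixes G :: "real^'n^'n" and M :: "'i \<Rightarrow> real^'n^'n"
  assumes "\<And>i. transpose (M i) ** G = G ** M i" "finite S"
  shows "transpose (\<Sum>i\<in>S. c i *\<^sub>R M i) ** G = G ** (\<Sum>i\<in>S. c i *\<^sub>R M i)"
  using assms(2)
proof (induction S rule: finite_induct)
  case empty
  then show ?case by (simp add: transpose_def matrix_matrix_mult_def vec_eq_iff)
next
  case (insert a S)
  then show ?case using assms(1)[of a] by (simp add: malg)
qed

lemma sum_trace: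
  fixes M :: "'i \<Rightarrow> real^'n^'n"
  assumes "finite S"
  shows "trace (\<Sum>i\<in>S. c i *\<^sub>R M i) = (\<Sum>i\<in>S. c i * trace (M i))"
  using assms
proof (induction S rule: finite_induct)
  case empty
  then show ?case by (simp add: trace_def)
next
  case (insert a S)
  then show ?case by (simp add: trace_add trace_def sum_distrib_left sum.distrib)
qed

lemma mv_inner: "((A::real^'n^'m) *v u) \<bullet> w = u \<bullet> (transpose A *v w)"
  by (metis dot_lmul_matrix vector_transpose_matrix transpose_transpose inner_commute)

theorem mainTheorem2:
  fixes U :: "(real^'n::finite) set"
    and g J :: "real^'n \<Rightarrow> real^'n^'n"
    and p q :: real
  assumes "metallic_pR U g J p q"
    and "p\<^sup>2 + 4 * q \<noteq> 0"
    and "\<forall>x\<in>U. \<forall>X Y. dJ g J x X Y = 0"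
  shows "\<forall>x\<in>U. \<forall>E. orthonormal_frame (g x) E \<longrightarrow> deltaJ g J x E = 0"
proof (intro ballI allI impI)
  fix x E assume xU: "x \<in> U" and fr: "orthonormal_frame (g x) E"
  define G where "G = g x"
  define NX where "NX X = nablaJ g J x X" for X
  have NXsym: "transpose (NX X) ** G = G ** NX X" for X
    unfolding NX_def nablaJ_def G_def
    by (rule sum_sym[OF Nsym[OF assms(1) xU]]) simp
  have NXtr: "trace (NX X) = 0" for X
    unfolding NX_def nablaJ_def
    by (simp add: sum_trace Ntr[OF assms(1) xU assms(2)])
  have comm: "NX X *v Y = NX Y *v X" for X Y
    using assms(3) xU unfolding dJ_def NX_def by simp
  define Q where "Q = (\<chi> k l. \<Sum>a\<in>UNIV. gmetric G (E a) (E a) * E a $ k * E a $ l)"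
  have QG: "Q ** G = mat 1" unfolding Q_def using fr G_def by (simp add: frame_inv)
  define \<delta> where "\<delta> = deltaJ g J x E"
  have key: "\<delta> \<bullet> (G *v Y) = 0" for Y
  proof -
    have "\<delta> \<bullet> (G *v Y) = - (\<Sum>a\<in>UNIV. gmetric G (E a) (E a) * ((NX (E a) *v E a) \<bullet> (G *v Y)))"
      by (simp add: \<delta>_def deltaJ_def NX_def G_def inner_sum_left)
    also have "\<dots> = - (\<Sum>a\<in>UNIV. gmetric G (E a) (E a) * (E a \<bullet> ((G ** NX Y) *v E a)))"
    proof -
      have "(NX (E a) *v E a) \<bullet> (G *v Y) = E a \<bullet> ((G ** NX Y) *v E a)" for a
      proof -
        have "(NX (E a) *v E a) \<bullet> (G *v Y) = E a \<bullet> ((transpose (NX (E a)) ** G) *v Y)"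
          by (simp add: mv_inner matrix_vector_mul_assoc)
        also have "\<dots> = E a \<bullet> (G *v (NX (E a) *v Y))"
          by (simp add: NXsym matrix_vector_mul_assoc)
        also have "\<dots> = E a \<bullet> ((G ** NX Y) *v E a)"
          by (simp add: comm matrix_vector_mul_assoc)
        finally show ?thesis .
      qed
      thus ?thesis by simp
    qed
    also have "\<dots> = - trace ((G ** NX Y) ** Q)"
      unfolding Q_def by (simp add: frame_sum)
    also have "trace ((G ** NX Y) ** Q) = trace (NX Y ** (Q ** G))"
      by (metis matrix_mul_assoc trace_mul_sym)
    also have "\<dots> = 0" by (simp add: QG NXtr)
    finally show ?thesis by simp
  qed
  have "G *v (matrix_inv G *v \<delta>) = \<delta>"
    using Ginv[OF assms(1) xU] by (simp add: G_def matrix_vector_mul_assoc)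
  hence "\<delta> \<bullet> \<delta> = 0" using key[of "matrix_inv G *v \<delta>"] by simp
  thus "deltaJ g J x E = 0" unfolding \<delta>_def by simp
qed

end
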